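(* Assume the Setting and consider Algorithm 1 with noisy data $y^\delta$ ($\|y^\delta-y\|\le\delta$, $\delta>0$), where $\tau>1$ and $\mu_0>0$ satisfy $c_0:=1-\frac{1+\eta}{\tau}-\eta-\frac{\mu_0}{4\sigma}>0$. Let $k\ge0$ be an integer such that $\|r_n^\delta\|>\tau\delta$ for all $0\le n<k$. Then $x_n^\delta\in B_{2\rho}(x_0)$ for all $0\le n\le k$, and for every solution $\hat x$ of $F(x)=y$ with $\hat x\in B_{2\rho}(x_0)\cap\mathrm{dom}(\mathcal R)$, setting $\Delta_n^\delta:=D_{\mathcal R}^{\xi_n^\delta}(\hat x,x_n^\delta)$, one has $\Delta_{n+1}^\delta\le\Delta_n^\delta-c_0\alpha_n^\delta\|r_n^\delta\|^2$ for all $0\le n<k$.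
   Context: Setting. Let $X,Y$ be real Hilbert spaces. Let $\mathcal R:X\to(-\infty,\infty]$ be proper, lower semicontinuous and strongly convex with constant $\sigma>0$, i.e. $\mathcal R(t\bar x+(1-t)x)+\sigma t(1-t)\|\bar x-x\|^2\le t\mathcal R(\bar x)+(1-t)\mathcal R(x)$ for all $\bar x,x\in\mathrm{dom}(\mathcal R)$ and $t\in[0,1]$. For $\xi\in\partial\mathcal R(x)$ (subdifferential) the Bregman distance is $D_{\mathcal R}^{\xi}(z,x)=\mathcal R(z)-\mathcal R(x)-\langle\xi,z-x\rangle$. The convex conjugate $\mathcal R^*$ is differentiable with $\|\nabla\mathcal R^*(\bar\xi)-\nabla\mathcal R^*(\xi)\|\le\|\bar\xi-\xi\|/(2\sigma)$, and $\nabla\mathcal R^*(\xi)=\arg\min_{x\in X}\{\mathcal R(x)-\langle\xi,x\rangle\}$ (unique minimizer), with $\xi\in\partial\mathcal R(\nabla\mathcal R^*(\xi))$. Let $F:\mathrm{dom}(F)\subset X\to Y$ and $y\in Y$. Assume: (b) there are $\rho>0$, $x_0\in X$, $\xi_0\in\partial\mathcal R(x_0)$ with $B_{2\rho}(x_0):=\{x:\|x-x_0\|\le 2\rho\}\subset\mathrm{dom}(F)$, and $F(x)=y$ has a solution $\bar x$ with $D_{\mathcal R}^{\xi_0}(\bar x,x_0)\le\sigma\rho^2$; (c) $F$ is weakly closed: if $x_n\in\mathrm{dom}(F)$, $x_n\rightharpoonup x$ and $F(x_n)\to v$, then $x\in\mathrm{dom}(F)$ and $F(x)=v$; (d) there are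 bounded linear operators $L(x):X\to Y$, $x\in B_{2\rho}(x_0)$, with $x\mapsto L(x)$ continuous on $B_{2\rho}(x_0)$, a constant $\eta\in[0,1)$ with $\|F(x)-F(\bar x)-L(\bar x)(x-\bar x)\|\le\eta\|F(x)-F(\bar x)\|$ for all $x,\bar x\in B_{2\rho}(x_0)$, and a constant $L>0$ with $\|L(x)\|\le L$ on $B_{2\rho}(x_0)$. Under these assumptions $F(x)=y$ has a unique solution $x^\dagger\in\mathrm{dom}(F)$ minimizing $D_{\mathcal R}^{\xi_0}(x,x_0)$ over all solutions; it satisfies $\|x^\dagger-x_0\|\le\rho$. Algorithm 1 (noisy data $y^\delta$ with $\|y^\delta-y\|\le\delta$, $\delta>0$). Parameters: $\tau>1$, $\beta\in(0,\infty]$, $\mu_0>0$, $\mu_1>0$, and a fixed choice of one of two step-size rules: (constant) $\alpha_n^\delta=\mu_0/L^2$, or (adaptive) $\alpha_n^\delta=\min\{\mu_0\|r_n^\delta\|^2/\|g_n^\delta\|^2,\mu_1\}$ (with $\mu_0\|r_n^\delta\|^2/\|g_n^\delta\|^2:=+\infty$ if $g_n^\delta=0$). Set $\xi_{-1}^\delta=\xi_0^\delta=\xi_0$, $x_0^\delta=x_0=\nabla\mathcal R^*(\xi_0)$. For $n\ge0$: (i) $r_n^\delta:=F(x_n^\delta)-y^\delta$; if $\|r_n^\delta\|\le\tau\delta$, stop and output $x_n^\delta$ (the stopping index is denoted $n_\delta$). (ii) $g_n^\delta:=L(x_n^\delta)^*r_n^\delta$ and $\alpha_n^\delta$ by the chosen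 rule. (iii) $m_n^\delta:=\xi_n^\delta-\xi_{n-1}^\delta$; $\tilde\gamma_0^\delta:=0$ and for $n\ge1$, $\tilde\gamma_n^\delta:=\langle m_n^\delta,x_n^\delta-x_{n-1}^\delta\rangle-(1-\eta)\alpha_{n-1}^\delta\|r_{n-1}^\delta\|^2+(1+\eta)\alpha_{n-1}^\delta\delta\|r_{n-1}^\delta\|+\beta_{n-1}^\delta\tilde\gamma_{n-1}^\delta$. (iv) $\beta_n^\delta:=\min\{\max\{0,(\alpha_n^\delta\langle g_n^\delta,m_n^\delta\rangle-2\sigma\tilde\gamma_n^\delta)/\|m_n^\delta\|^2\},\beta\}$ if $m_n^\delta\ne0$, and $\beta_n^\delta:=0$ if $m_n^\delta=0$. (v) $\xi_{n+1}^\delta:=\xi_n^\delta-\alpha_n^\delta g_n^\delta+\beta_n^\delta m_n^\delta$, $x_{n+1}^\delta:=\nabla\mathcal R^*(\xi_{n+1}^\delta)$. *)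

theory Defs
  imports "HOL-Analysis.Analysis" "HOL-Library.Liminf_Limsup"
begin

text \<open>Real Hilbert spaces are modelled as types of class real_inner + complete_space.\<close>

definition proper_fun :: "('a \<Rightarrow> ereal) \<Rightarrow> bool" where
  "proper_fun R \<longleftrightarrow> (\<forall>x. R x \<noteq> -\<infinity>) \<and> (\<exists>x. R x < \<infinity>)"

definition effdom :: "('a \<Rightarrow> ereal) \<Rightarrow> 'a set" where
  "effdom R = {x. R x < \<infinity>}"

definition lsc_fun :: "('a::metric_space \<Rightarrow> ereal) \<Rightarrow> bool" where
  "lsc_fun R \<longleftrightarrow> (\<forall>x s. s \<longlonglongrightarrow> x \<longrightarrow> R x \<le> liminf (\<lambda>n. R (s n)))"

definition strongly_convex :: "('a::real_normed_vector \<Rightarrow> ereal) \<Rightarrow> real \<Rightarrow> bool" where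
  "strongly_convex R \<sigma> \<longleftrightarrow>
     (\<forall>xb\<in>effdom R. \<forall>x\<in>effdom R. \<forall>t::real. 0 \<le> t \<and> t \<le> 1 \<longrightarrow>
        R (t *\<^sub>R xb + (1 - t) *\<^sub>R x) + ereal (\<sigma> * t * (1 - t) * (norm (xb - x))\<^sup>2)
          \<le> ereal t * R xb + ereal (1 - t) * R x)"

definition subdiff :: "('a::real_inner \<Rightarrow> ereal) \<Rightarrow> 'a \<Rightarrow> 'a set" where
  "subdiff R x = {\<xi>. R x < \<infinity> \<and> R x \<noteq> -\<infinity> \<and>
                     (\<forall>z. R z \<ge> R x + ereal (\<xi> \<bullet> (z - x)))}"

definition bregman :: "('a::real_inner \<Rightarrow> ereal) \<Rightarrow> 'a \<Rightarrow> 'a \<Rightarrow> 'a \<Rightarrow> ereal" where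
  "bregman R \<xi> z x = R z - R x - ereal (\<xi> \<bullet> (z - x))"

text \<open>Gradient of the convex conjugate: the unique minimiser of R(x) - <xi,x>.\<close>
definition grad_conj :: "('a::real_inner \<Rightarrow> ereal) \<Rightarrow> 'a \<Rightarrow> 'a" where
  "grad_conj R \<xi> = (THE x. \<forall>z. R x - ereal (\<xi> \<bullet> x) \<le> R z - ereal (\<xi> \<bullet> z))"

definition weakly_conv :: "(nat \<Rightarrow> 'a::real_inner) \<Rightarrow> 'a \<Rightarrow> bool" where
  "weakly_conv s x \<longleftrightarrow> (\<forall>z. (\<lambda>n. s n \<bullet> z) \<longlonglongrightarrow> x \<bullet> z)"

definition weakly_closed_op :: "('a::real_inner \<Rightarrow> 'b::real_normed_vector) \<Rightarrow> 'a set \<Rightarrow> bool" where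
  "weakly_closed_op F D \<longleftrightarrow>
     (\<forall>s x v. (\<forall>n. s n \<in> D) \<and> weakly_conv s x \<and> (\<lambda>n. F (s n)) \<longlonglongrightarrow> v
        \<longrightarrow> x \<in> D \<and> F x = v)"

end

theory Submission
  imports Defs
begin



definition seq_lsc :: "'a::metric_space set \<Rightarrow> ('a \<Rightarrow> real) \<Rightarrow> bool" where
  "seq_lsc D f \<longleftrightarrow> (\<forall>s x c (c0::real). s \<longlonglongrightarrow> x \<and> (\<forall>n. s n \<in> D) \<and> (\<forall>n. f (s n) \<le> c n) \<and> c \<longlonglongrightarrow> c0
      \<longrightarrow> x \<in> D \<and> f x \<le> c0)"

definition sconv :: "'a::real_normed_vector set \<Rightarrow> ('a \<Rightarrow> real) \<Rightarrow> real \<Rightarrow> bool" where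
  "sconv D f \<sigma> \<longleftrightarrow> (\<forall>a\<in>D. \<forall>b\<in>D. \<forall>t::real. 0 \<le> t \<and> t \<le> 1 \<longrightarrow>
      t *\<^sub>R a + (1 - t) *\<^sub>R b \<in> D \<and>
      f (t *\<^sub>R a + (1 - t) *\<^sub>R b) + \<sigma> * t * (1 - t) * (norm (a - b))\<^sup>2 \<le> t * f a + (1 - t) * f b)"

lemma sconv_mid:
  assumes "sconv D f \<sigma>" "a \<in> D" "b \<in> D"
  shows "(1/2) *\<^sub>R a + (1/2) *\<^sub>R b \<in> D \<and>
     f ((1/2) *\<^sub>R a + (1/2) *\<^sub>R b) + \<sigma>/4 * (norm (a - b))\<^sup>2 \<le> (f a + f b)/2"
  using assms unfolding sconv_def
  apply (erule_tac x=a in ballE) apply (erule_tac x=b in ballE)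
  apply (erule_tac x="1/2" in allE) by auto

lemma inv_lim: "(\<lambda>n. 1 / (real n + 1)) \<longlonglongrightarrow> 0"
  using LIMSEQ_inverse_real_of_nat by (simp add: inverse_eq_divide add.commute)

lemma conv_aux:
  fixes s :: "nat \<Rightarrow> 'a::real_normed_vector"
  assumes "\<And>n. norm (s n - x) \<le> 1 / (real n + 1)"
  shows "s \<longlonglongrightarrow> x"
proof -
  have "(\<lambda>n. s n - x) \<longlonglongrightarrow> 0"
    by (rule Lim_null_comparison[OF always_eventually inv_lim]) (use assms in auto)
  then show ?thesis by (simp add: LIM_zero_iff)
qed

lemma lower_bound:
  fixes f :: "'a::real_normed_vector \<Rightarrow> real"
  assumes sc: "sconv D f \<sigma>" and sig: "\<sigma> > 0" and ls: "seq_lsc D f" and x1: "x1 \<in> D"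
  shows "\<exists>B. \<forall>z\<in>D. B \<le> f z"
proof -
  have "\<exists>\<epsilon>>0. \<forall>z\<in>D. norm (z - x1) \<le> \<epsilon> \<longrightarrow> f x1 - 1 \<le> f z"
  proof (rule ccontr)
    assume "\<not> ?thesis"
    then have "\<forall>n::nat. \<exists>z. z \<in> D \<and> norm (z - x1) \<le> 1 / (real n + 1) \<and> f z < f x1 - 1"
      by (metis divide_pos_pos not_le of_nat_add of_nat_0_le_iff of_nat_1 add_pos_nonneg zero_less_one add.commute)
    then obtain s where s: "\<And>n. s n \<in> D" "\<And>n. norm (s n - x1) \<le> 1 / (real n + 1)" "\<And>n. f (s n) < f x1 - 1"
      by metis
    have "s \<longlonglongrightarrow> x1" using s(2) by (rule conv_aux)
    then have "f x1 \<le> f x1 - 1" using ls s unfolding seq_lsc_def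
      by (metis (no_types, lifting) less_imp_le tendsto_const)
    then show False by simp
  qed
  then obtain \<epsilon> where ep: "\<epsilon> > 0" "\<And>z. z \<in> D \<Longrightarrow> norm (z - x1) \<le> \<epsilon> \<Longrightarrow> f x1 - 1 \<le> f z" by blast
  define a where "a = 1/\<epsilon> + \<sigma> * \<epsilon>"
  show ?thesis
  proof (intro exI ballI)
    fix z assume z: "z \<in> D"
    show "f x1 - 1 - a\<^sup>2 / (4 * \<sigma>) \<le> f z"
    proof (cases "norm (z - x1) \<le> \<epsilon>")
      case True
      then show ?thesis using ep z sig by (smt (verit) divide_nonneg_pos zero_le_power2)
    next
      case False
      define d where "d = norm (z - x1)"
      have d: "d > \<epsilon>" using False d_def by simp
      define t where "t = \<epsilon> / d"
      have t: "0 < t" "t < 1" using d ep by (auto simp: t_def)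
      define w where "w = t *\<^sub>R z + (1 - t) *\<^sub>R x1"
      have wD: "w \<in> D" and cv: "f w + \<sigma> * t * (1 - t) * d\<^sup>2 \<le> t * f z + (1 - t) * f x1"
        using sc z x1 t unfolding sconv_def w_def d_def by auto
      have "w - x1 = t *\<^sub>R (z - x1)" by (simp add: w_def algebra_simps)
      then have "norm (w - x1) = \<epsilon>" using t d ep by (auto simp: t_def d_def)
      then have fw: "f x1 - 1 \<le> f w" using ep wD by simp
      have "t * f z \<ge> t * f x1 - 1 + \<sigma> * t * (1 - t) * d\<^sup>2" using cv fw by (simp add: algebra_simps)
      then have "f z \<ge> f x1 - 1/t + \<sigma> * (1 - t) * d\<^sup>2" using t
        by (simp add: field_simps)
      moreover have "1/t = d/\<epsilon>" using t_def ep d by simp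
      moreover have "\<sigma> * (1 - t) * d\<^sup>2 = \<sigma> * d\<^sup>2 - \<sigma> * \<epsilon> * d" using d ep
        by (simp add: t_def field_simps power2_eq_square)
      moreover have "\<sigma> * d\<^sup>2 - a * d \<ge> - a\<^sup>2 / (4 * \<sigma>)"
      proof -
        have "0 \<le> (2*\<sigma>*d - a)\<^sup>2" by simp
        then have "0 \<le> 4*\<sigma>*(\<sigma>*d\<^sup>2 - a*d) + a\<^sup>2" by (simp add: power2_eq_square algebra_simps)
        then show ?thesis using sig by (simp add: field_simps)
      qed
      moreover have "d/\<epsilon> + \<sigma> * \<epsilon> * d = a * d" using ep by (simp add: a_def field_simps)
      ultimately show ?thesis by linarith
    qed
  qed
qed


lemma aux_lin: "(A::real) \<le> (u+v)/2 - m \<Longrightarrow> u < m + a \<Longrightarrow> v < m + b \<Longrightarrow> A \<le> (a+b)/2"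
  by (simp add: field_simps)

lemma aux_lin2: "(A::real) \<le> (a+b)/2 \<Longrightarrow> a \<le> c \<Longrightarrow> b \<le> c \<Longrightarrow> A \<le> c"
  by (simp add: field_simps)

lemma exists_min:
  fixes f :: "'a::{real_normed_vector, complete_space} \<Rightarrow> real"
  assumes sc: "sconv D f \<sigma>" and sig: "\<sigma> > 0" and ls: "seq_lsc D f" and ne: "D \<noteq> {}"
  shows "\<exists>x\<in>D. \<forall>z\<in>D. f x \<le> f z"
proof -
  obtain x1 where x1: "x1 \<in> D" using ne by blast
  obtain B where B: "\<And>z. z \<in> D \<Longrightarrow> B \<le> f z" using lower_bound[OF sc sig ls x1] by blast
  define m where "m = Inf (f ` D)"
  have bdd: "bdd_below (f ` D)" using B by (metis bdd_below.I2)
  have m_le: "\<And>z. z \<in> D \<Longrightarrow> m \<le> f z" unfolding m_def using bdd by (auto intro: cInf_lower)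
  have "\<forall>n::nat. \<exists>z. z \<in> D \<and> f z < m + 1 / (real n + 1)"
  proof
    fix n :: nat
    have "Inf (f ` D) < m + 1 / (real n + 1)" unfolding m_def by (simp add: add_pos_pos)
    then obtain v where "v \<in> f ` D" "v < m + 1 / (real n + 1)"
      using cInf_lessD[of "f ` D"] ne by blast
    then show "\<exists>z. z \<in> D \<and> f z < m + 1 / (real n + 1)" by blast
  qed
  then obtain s where s: "\<And>n. s n \<in> D" "\<And>n. f (s n) < m + 1 / (real n + 1)" by metis
  have key: "\<And>p q. \<sigma>/4 * (norm (s p - s q))\<^sup>2 \<le> (1 / (real p + 1) + 1 / (real q + 1)) / 2"
  proof -
    fix p q
    from sconv_mid[OF sc s(1)[of p] s(1)[of q]]
    have "\<sigma>/4 * (norm (s p - s q))\<^sup>2 \<le> (f (s p) + f (s q))/2 - m"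
      using m_le[of "(1 / 2) *\<^sub>R s p + (1 / 2) *\<^sub>R s q"] by linarith
    moreover have "f (s p) < m + 1 / (real p + 1)" "f (s q) < m + 1 / (real q + 1)" using s(2) by auto
    ultimately show "\<sigma>/4 * (norm (s p - s q))\<^sup>2 \<le> (1 / (real p + 1) + 1 / (real q + 1)) / 2"
      by (rule aux_lin)
  qed
  have "Cauchy s"
  proof (rule metric_CauchyI)
    fix e :: real assume e: "e > 0"
    obtain N :: nat where N: "real N > 4 / (\<sigma> * e\<^sup>2)" using reals_Archimedean2 by blast
    show "\<exists>M. \<forall>p\<ge>M. \<forall>q\<ge>M. dist (s p) (s q) < e"
    proof (intro exI allI impI)
      fix p q assume pq: "N \<le> p" "N \<le> q"
      have "1 / (real p + 1) \<le> 1 / (real N + 1)" "1 / (real q + 1) \<le> 1 / (real N + 1)"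
        using pq by (auto simp: frac_le)
      with key[of p q] have "\<sigma>/4 * (norm (s p - s q))\<^sup>2 \<le> 1 / (real N + 1)" by (blast intro: aux_lin2)
      also have "1 / (real N + 1) < \<sigma> * e\<^sup>2 / 4"
      proof -
        have "4 / (\<sigma> * e\<^sup>2) < real N + 1" using N by linarith
        then have "4 < (real N + 1) * (\<sigma> * e\<^sup>2)" using sig e by (simp add: field_simps)
        then show ?thesis using sig e by (simp add: field_simps)
      qed
      finally have "(norm (s p - s q))\<^sup>2 < e\<^sup>2" using sig by (simp add: field_simps)
      then show "dist (s p) (s q) < e" using e by (simp add: dist_norm power_less_imp_less_base)
    qed
  qed
  then obtain x where x: "s \<longlonglongrightarrow> x" using convergent_eq_Cauchy convergent_def by blast
  have cl: "(\<lambda>n. m + 1 / (real n + 1)) \<longlonglongrightarrow> m" using tendsto_add[OF tendsto_const inv_lim] by simp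
  have "x \<in> D \<and> f x \<le> m" using ls x s cl unfolding seq_lsc_def
    by (metis (no_types, lifting) less_imp_le)
  then show ?thesis using m_le by force
qed




lemma strong_sub:
  fixes f :: "'a::real_inner \<Rightarrow> real"
  assumes sc: "sconv D f \<sigma>" and sig: "\<sigma> > 0" and x: "x \<in> D" and z: "z \<in> D"
    and sub: "\<And>w. w \<in> D \<Longrightarrow> f x + \<xi> \<bullet> (w - x) \<le> f w"
  shows "f x + \<xi> \<bullet> (z - x) + \<sigma> * (norm (z - x))\<^sup>2 \<le> f z"
proof -
  define a where "a = f z - f x - \<xi> \<bullet> (z - x)"
  define D2 where "D2 = (norm (z - x))\<^sup>2"
  have ineq: "\<sigma> * (1 - t) * D2 \<le> a" if t: "0 < t" "t \<le> 1" for t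
  proof -
    define w where "w = t *\<^sub>R z + (1 - t) *\<^sub>R x"
    have wD: "w \<in> D" and cv: "f w + \<sigma> * t * (1 - t) * D2 \<le> t * f z + (1 - t) * f x"
      using sc z x t unfolding sconv_def w_def D2_def by auto
    have "w - x = t *\<^sub>R (z - x)" by (simp add: w_def algebra_simps)
    then have "f x + t * (\<xi> \<bullet> (z - x)) \<le> f w" using sub[OF wD] by simp
    with cv have "t * (\<sigma> * (1 - t) * D2) \<le> t * a" by (simp add: a_def algebra_simps)
    then show ?thesis using t by simp
  qed
  have "\<sigma> * D2 \<le> a"
  proof (rule ccontr)
    assume neg: "\<not> \<sigma> * D2 \<le> a"
    have a0: "0 \<le> a" using ineq[of 1] by simp
    have "D2 \<ge> 0" unfolding D2_def by simp
    then have D2pos: "D2 > 0" using neg a0 by (cases "D2 = 0") auto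
    define t where "t = min 1 ((\<sigma> * D2 - a) / (2 * \<sigma> * D2))"
    have t: "0 < t" "t \<le> 1" using neg D2pos sig by (auto simp: t_def)
    have "t * (\<sigma> * D2) \<le> (\<sigma> * D2 - a) / 2"
    proof -
      have "t \<le> (\<sigma> * D2 - a) / (2 * \<sigma> * D2)" by (simp add: t_def)
      then have "t * (\<sigma> * D2) \<le> (\<sigma> * D2 - a) / (2 * \<sigma> * D2) * (\<sigma> * D2)"
        by (rule mult_right_mono) (use sig D2pos in auto)
      also have "\<dots> = (\<sigma> * D2 - a) / 2" using sig D2pos by (simp add: field_simps)
      finally show ?thesis .
    qed
    then have "\<sigma> * (1 - t) * D2 > a" using neg by (simp add: algebra_simps)
    then show False using ineq[OF t] by simp
  qed
  then show ?thesis by (simp add: a_def D2_def)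
qed

lemma R_fin: "proper_fun R \<Longrightarrow> z \<in> effdom R \<Longrightarrow> R z = ereal (real_of_ereal (R z))"
  unfolding proper_fun_def effdom_def by (cases "R z") auto

lemma R_notdom: "z \<notin> effdom R \<Longrightarrow> R z = \<infinity>"
  unfolding effdom_def by auto

lemma sconv_R:
  assumes pr: "proper_fun R" and sc: "strongly_convex R \<sigma>"
  shows "sconv (effdom R) (\<lambda>z. real_of_ereal (R z)) \<sigma>"
  unfolding sconv_def
proof (intro ballI allI impI)
  fix a b and t :: real
  assume a: "a \<in> effdom R" and b: "b \<in> effdom R" and t: "0 \<le> t \<and> t \<le> 1"
  define w where "w = t *\<^sub>R a + (1 - t) *\<^sub>R b"
  have "R w + ereal (\<sigma> * t * (1 - t) * (norm (a - b))\<^sup>2) \<le> ereal t * R a + ereal (1 - t) * R b"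
    using sc a b t unfolding strongly_convex_def w_def by blast
  also have "\<dots> = ereal (t * real_of_ereal (R a) + (1 - t) * real_of_ereal (R b))"
    using R_fin[OF pr a] R_fin[OF pr b] by (metis plus_ereal.simps(1) times_ereal.simps(1))
  finally have ineq: "R w + ereal (\<sigma> * t * (1 - t) * (norm (a - b))\<^sup>2) \<le> ereal (t * real_of_ereal (R a) + (1 - t) * real_of_ereal (R b))" .
  have "R w \<noteq> \<infinity>" using ineq by auto
  then have wD: "w \<in> effdom R" unfolding effdom_def by (cases "R w") auto
  have "R w = ereal (real_of_ereal (R w))" by (rule R_fin[OF pr wD])
  with ineq have "real_of_ereal (R w) + \<sigma> * t * (1 - t) * (norm (a - b))\<^sup>2 \<le> t * real_of_ereal (R a) + (1 - t) * real_of_ereal (R b)"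
    by (metis ereal_less_eq(3) plus_ereal.simps(1))
  then show "t *\<^sub>R a + (1 - t) *\<^sub>R b \<in> effdom R \<and>
      real_of_ereal (R (t *\<^sub>R a + (1 - t) *\<^sub>R b)) + \<sigma> * t * (1 - t) * (norm (a - b))\<^sup>2
        \<le> t * real_of_ereal (R a) + (1 - t) * real_of_ereal (R b)"
    using wD by (simp add: w_def)
qed

lemma sconv_lin:
  assumes sc: "sconv D f \<sigma>"
  shows "sconv D (\<lambda>z. f z - \<xi> \<bullet> z) \<sigma>"
  unfolding sconv_def
proof (intro ballI allI impI)
  fix a b and t :: real
  assume a: "a \<in> D" and b: "b \<in> D" and t: "0 \<le> t \<and> t \<le> 1"
  have h: "t *\<^sub>R a + (1 - t) *\<^sub>R b \<in> D \<and> f (t *\<^sub>R a + (1 - t) *\<^sub>R b) + \<sigma> * t * (1 - t) * (norm (a - b))\<^sup>2 \<le> t * f a + (1 - t) * f b"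
    using sc a b t unfolding sconv_def by blast
  have e: "\<xi> \<bullet> (t *\<^sub>R a + (1 - t) *\<^sub>R b) = t * (\<xi> \<bullet> a) + (1 - t) * (\<xi> \<bullet> b)"
    by (simp add: inner_add_right)
  show "t *\<^sub>R a + (1 - t) *\<^sub>R b \<in> D \<and>
       f (t *\<^sub>R a + (1 - t) *\<^sub>R b) - \<xi> \<bullet> (t *\<^sub>R a + (1 - t) *\<^sub>R b) + \<sigma> * t * (1 - t) * (norm (a - b))\<^sup>2
       \<le> t * (f a - \<xi> \<bullet> a) + (1 - t) * (f b - \<xi> \<bullet> b)"
  proof -
    have "t * (f a - \<xi> \<bullet> a) + (1 - t) * (f b - \<xi> \<bullet> b) = t * f a + (1 - t) * f b - (t * (\<xi> \<bullet> a) + (1 - t) * (\<xi> \<bullet> b))"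
      by (simp add: right_diff_distrib)
    then show ?thesis using h unfolding e by linarith
  qed
qed




lemma aux_lin3: "(M::real) + S \<le> (a+b)/2 \<Longrightarrow> a \<le> M \<Longrightarrow> b \<le> a \<Longrightarrow> a \<le> b \<Longrightarrow> S \<le> 0"
  by (simp add: field_simps)

lemma lsc_R:
  assumes pr: "proper_fun R" and ls: "lsc_fun R"
  shows "seq_lsc (effdom R) (\<lambda>z. real_of_ereal (R z) - \<xi> \<bullet> z)"
  unfolding seq_lsc_def
proof (intro allI impI)
  fix s x c c0
  assume H: "s \<longlonglongrightarrow> x \<and> (\<forall>n. s n \<in> effdom R) \<and> (\<forall>n. real_of_ereal (R (s n)) - \<xi> \<bullet> s n \<le> c n) \<and> c \<longlonglongrightarrow> c0"
  define u where "u n = c n + \<xi> \<bullet> s n" for n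
  have ul: "u \<longlonglongrightarrow> c0 + \<xi> \<bullet> x" unfolding u_def using H by (intro tendsto_add tendsto_inner tendsto_const) auto
  have le: "R (s n) \<le> ereal (u n)" for n
  proof -
    have "R (s n) = ereal (real_of_ereal (R (s n)))" using R_fin[OF pr] H by blast
    moreover have "real_of_ereal (R (s n)) \<le> u n" using H by (simp add: u_def algebra_simps)
    ultimately show ?thesis by (metis ereal_less_eq(3))
  qed
  have "R x \<le> liminf (\<lambda>n. R (s n))" using ls H unfolding lsc_fun_def by blast
  also have "\<dots> \<le> liminf (\<lambda>n. ereal (u n))" by (rule Liminf_mono) (simp add: le)
  also have "\<dots> = ereal (c0 + \<xi> \<bullet> x)" by (rule lim_imp_Liminf) (auto intro: tendsto_ereal ul)
  finally have Rx: "R x \<le> ereal (c0 + \<xi> \<bullet> x)" .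
  then have xD: "x \<in> effdom R" unfolding effdom_def by (cases "R x") auto
  have "R x = ereal (real_of_ereal (R x))" by (rule R_fin[OF pr xD])
  with Rx have "real_of_ereal (R x) \<le> c0 + \<xi> \<bullet> x" by (metis ereal_less_eq(3))
  then show "x \<in> effdom R \<and> real_of_ereal (R x) - \<xi> \<bullet> x \<le> c0" using xD by simp
qed

lemma subdiff_real:
  assumes pr: "proper_fun R" and sd: "\<xi> \<in> subdiff R x"
  shows "x \<in> effdom R" and "\<And>z. z \<in> effdom R \<Longrightarrow> real_of_ereal (R x) + \<xi> \<bullet> (z - x) \<le> real_of_ereal (R z)"
proof -
  show xD: "x \<in> effdom R" using sd unfolding subdiff_def effdom_def by auto
  fix z assume zD: "z \<in> effdom R"
  have "R z \<ge> R x + ereal (\<xi> \<bullet> (z - x))" using sd unfolding subdiff_def by auto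
  then have "ereal (real_of_ereal (R z)) \<ge> ereal (real_of_ereal (R x)) + ereal (\<xi> \<bullet> (z - x))"
    using R_fin[OF pr xD] R_fin[OF pr zD] by simp
  then show "real_of_ereal (R x) + \<xi> \<bullet> (z - x) \<le> real_of_ereal (R z)" by simp
qed

lemma real_subdiff:
  assumes pr: "proper_fun R" and xD: "x \<in> effdom R"
    and h: "\<And>z. z \<in> effdom R \<Longrightarrow> real_of_ereal (R x) + \<xi> \<bullet> (z - x) \<le> real_of_ereal (R z)"
  shows "\<xi> \<in> subdiff R x"
  unfolding subdiff_def
proof (safe)
  show "R x < \<infinity>" using xD unfolding effdom_def by simp
  show "R x = - \<infinity> \<Longrightarrow> False" using pr unfolding proper_fun_def by auto
  fix z
  show "R x + ereal (\<xi> \<bullet> (z - x)) \<le> R z"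
  proof (cases "z \<in> effdom R")
    case True
    then show ?thesis using h[OF True] R_fin[OF pr xD] R_fin[OF pr True]
      by (metis ereal_less_eq(3) plus_ereal.simps(1))
  next
    case False
    then show ?thesis using R_notdom[OF False] by simp
  qed
qed

lemma bregman_real:
  assumes pr: "proper_fun R" and "xh \<in> effdom R" "x \<in> effdom R"
  shows "bregman R \<xi> xh x = ereal (real_of_ereal (R xh) - real_of_ereal (R x) - \<xi> \<bullet> (xh - x))"
  unfolding bregman_def using R_fin[OF pr assms(2)] R_fin[OF pr assms(3)]
  by (metis ereal_minus(1))

lemma gc:
  fixes R :: "'a::{real_inner, complete_space} \<Rightarrow> ereal"
  assumes pr: "proper_fun R" and ls: "lsc_fun R" and sc: "strongly_convex R \<sigma>" and sig: "\<sigma> > 0"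
  shows "grad_conj R \<xi> \<in> effdom R \<and> \<xi> \<in> subdiff R (grad_conj R \<xi>)"
proof -
  define f where "f z = real_of_ereal (R z) - \<xi> \<bullet> z" for z
  have scf: "sconv (effdom R) f \<sigma>" unfolding f_def by (rule sconv_lin[OF sconv_R[OF pr sc]])
  have lsf: "seq_lsc (effdom R) f" unfolding f_def by (rule lsc_R[OF pr ls])
  have ne: "effdom R \<noteq> {}" using pr unfolding proper_fun_def effdom_def by auto
  obtain x where xD: "x \<in> effdom R" and xmin: "\<And>z. z \<in> effdom R \<Longrightarrow> f x \<le> f z"
    using exists_min[OF scf sig lsf ne] by blast
  have Rmf: "y \<in> effdom R \<Longrightarrow> R y - ereal (\<xi> \<bullet> y) = ereal (f y)" for y
    using R_fin[OF pr, of y] unfolding f_def by (metis ereal_minus(1))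
  have Px: "\<forall>z. R x - ereal (\<xi> \<bullet> x) \<le> R z - ereal (\<xi> \<bullet> z)"
  proof
    fix z show "R x - ereal (\<xi> \<bullet> x) \<le> R z - ereal (\<xi> \<bullet> z)"
    proof (cases "z \<in> effdom R")
      case True then show ?thesis using Rmf[OF xD] Rmf[OF True] xmin[OF True] by simp
    next
      case False then show ?thesis using R_notdom[OF False] by simp
    qed
  qed
  have uniq: "y = x" if Py: "\<forall>z. R y - ereal (\<xi> \<bullet> y) \<le> R z - ereal (\<xi> \<bullet> z)" for y
  proof -
    have yle: "R y - ereal (\<xi> \<bullet> y) \<le> ereal (f x)" using Py Rmf[OF xD] by metis
    have yD: "y \<in> effdom R"
    proof (rule ccontr)
      assume yn: "y \<notin> effdom R"
      then have "R y - ereal (\<xi> \<bullet> y) = \<infinity>" using R_notdom[OF yn] by simp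
      with yle show False by simp
    qed
    have fyx: "f y \<le> f x" using yle Rmf[OF yD] by simp
    have fxy: "f x \<le> f y" using xmin[OF yD] .
    from sconv_mid[OF scf xD yD]
    have "f ((1/2) *\<^sub>R x + (1/2) *\<^sub>R y) + \<sigma>/4 * (norm (x - y))\<^sup>2 \<le> (f x + f y)/2"
      and mD: "(1/2) *\<^sub>R x + (1/2) *\<^sub>R y \<in> effdom R" by auto
    moreover have "f x \<le> f ((1/2) *\<^sub>R x + (1/2) *\<^sub>R y)" using xmin[OF mD] .
    ultimately have "\<sigma>/4 * (norm (x - y))\<^sup>2 \<le> 0" using fyx fxy by (blast intro: aux_lin3)
    then have "(norm (x - y))\<^sup>2 \<le> 0" using sig by (simp add: mult_le_0_iff)
    then show "y = x" by simp
  qed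
  have gx: "grad_conj R \<xi> = x"
    unfolding grad_conj_def
    by (rule the_equality[where P="\<lambda>y. \<forall>z. R y - ereal (\<xi> \<bullet> y) \<le> R z - ereal (\<xi> \<bullet> z)"]) (rule Px, erule uniq)
  have "\<xi> \<in> subdiff R x"
  proof (rule real_subdiff[OF pr xD])
    fix z assume zD: "z \<in> effdom R"
    have "real_of_ereal (R x) - \<xi> \<bullet> x \<le> real_of_ereal (R z) - \<xi> \<bullet> z"
      using xmin[OF zD] unfolding f_def .
    then show "real_of_ereal (R x) + \<xi> \<bullet> (z - x) \<le> real_of_ereal (R z)"
      by (simp add: inner_diff_right)
  qed
  then show ?thesis using gx xD by simp
qed


lemma aux_sc2: "(X::real) + t*(1-t)*Y = t*A + (1-t)*B \<Longrightarrow> X/2 - (t*p + (1-t)*q) + 1/2*t*(1-t)*Y \<le> t*(A/2 - p) + (1-t)*(B/2 - q)"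
proof -
  assume h: "X + t*(1-t)*Y = t*A + (1-t)*B"
  have "X/2 - (t*p + (1-t)*q) + 1/2*t*(1-t)*Y = (X + t*(1-t)*Y)/2 - (t*p + (1-t)*q)" by (simp add: field_simps)
  also have "\<dots> = t*(A/2 - p) + (1-t)*(B/2 - q)" unfolding h by (simp add: field_simps)
  finally show ?thesis by simp
qed
lemma norm_id:
  fixes a b :: "'a::real_inner"
  shows "(norm (t *\<^sub>R a + (1-t) *\<^sub>R b))\<^sup>2 + t*(1-t)*(norm (a-b))\<^sup>2 = t*(norm a)\<^sup>2 + (1-t)*(norm b)\<^sup>2"
proof -
  have "(norm (t *\<^sub>R a + (1-t) *\<^sub>R b))\<^sup>2 = t*t*(a \<bullet> a) + 2*t*(1-t)*(a \<bullet> b) + (1-t)*(1-t)*(b \<bullet> b)"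
    by (simp add: power2_norm_eq_inner inner_add_left inner_add_right inner_commute[of b a] algebra_simps)
  moreover have "(norm (a-b))\<^sup>2 = a \<bullet> a - 2*(a \<bullet> b) + b \<bullet> b"
    by (simp add: power2_norm_eq_inner inner_diff_left inner_diff_right inner_commute[of b a])
  moreover have "(norm a)\<^sup>2 = a \<bullet> a" "(norm b)\<^sup>2 = b \<bullet> b" by (simp_all add: power2_norm_eq_inner)
  moreover have "t*t*(a \<bullet> a) + 2*t*(1-t)*(a \<bullet> b) + (1-t)*(1-t)*(b \<bullet> b) + t*(1-t)*(a \<bullet> a - 2*(a \<bullet> b) + b \<bullet> b) = t*(a \<bullet> a) + (1-t)*(b \<bullet> b)"
    by algebra
  ultimately show ?thesis by simp
qed

lemma norm_id2:
  fixes z v :: "'a::real_inner"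
  shows "(norm (z + s *\<^sub>R v))\<^sup>2 = (norm z)\<^sup>2 + 2 * s * (z \<bullet> v) + s * s * (norm v)\<^sup>2"
  by (simp add: power2_norm_eq_inner inner_add_left inner_add_right inner_commute[of v z] algebra_simps)

lemma quad_zero:
  fixes c A :: real
  assumes A: "A \<ge> 0" and h: "\<And>s. s * c + s * s * A \<ge> 0"
  shows "c = 0"
proof (rule ccontr)
  assume c: "c \<noteq> 0"
  define p where "p = 2*A+1"
  have pos: "p > 0" using A by (simp add: p_def)
  define s where "s = - c / p"
  have sp: "s * p = - c" using pos by (simp add: s_def)
  have "(s * c + s * s * A) * (p * p) = (s*p)*c*p + (s*p)*(s*p)*A" by (simp add: algebra_simps)
  also have "\<dots> = (-c)*c*p + (-c)*(-c)*A" by (simp only: sp)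
  also have "\<dots> = -(c*c)*(A+1)" by (simp add: p_def algebra_simps)
  also have "\<dots> < 0"
  proof -
    have "c*c > 0" using c by (metis not_real_square_gt_zero)
    then have "(c*c)*(A+1) > 0" using A by (simp add: zero_less_mult_iff)
    then show ?thesis by simp
  qed
  finally have "(s * c + s * s * A) * (p * p) < 0" .
  moreover have "p * p > 0" using pos by simp
  ultimately have "s * c + s * s * A < 0" by (simp add: mult_less_0_iff)
  then show False using h[of s] by simp
qed
lemma riesz:
  fixes \<phi> :: "'a::{real_inner, complete_space} \<Rightarrow> real"
  assumes bl: "bounded_linear \<phi>"
  shows "\<exists>w. \<forall>v. \<phi> v = v \<bullet> w"
proof -
  interpret bounded_linear \<phi> by fact
  define f where "f z = (norm z)\<^sup>2 / 2 - \<phi> z" for z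
  have sc: "sconv UNIV f (1/2)"
    unfolding sconv_def
  proof (intro ballI allI impI conjI)
    fix a b :: 'a and t :: real
    show "t *\<^sub>R a + (1 - t) *\<^sub>R b \<in> UNIV" by simp
    have l: "\<phi> (t *\<^sub>R a + (1 - t) *\<^sub>R b) = t * \<phi> a + (1 - t) * \<phi> b" by (simp add: add scale)
    show "f (t *\<^sub>R a + (1 - t) *\<^sub>R b) + 1 / 2 * t * (1 - t) * (norm (a - b))\<^sup>2 \<le> t * f a + (1 - t) * f b"
      unfolding f_def l by (rule aux_sc2[OF norm_id[of t a b]])
  qed
  have ls: "seq_lsc UNIV f"
    unfolding seq_lsc_def
  proof (intro allI impI conjI)
    fix s x c and c0 :: real
    assume H: "s \<longlonglongrightarrow> x \<and> (\<forall>n. s n \<in> UNIV) \<and> (\<forall>n. f (s n) \<le> c n) \<and> c \<longlonglongrightarrow> c0"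
    show "x \<in> UNIV" by simp
    have "(\<lambda>n. f (s n)) \<longlonglongrightarrow> f x" unfolding f_def using H
      by (intro tendsto_diff tendsto_divide tendsto_power tendsto_norm tendsto tendsto_const) auto
    then show "f x \<le> c0" using H by (intro LIMSEQ_le[of "\<lambda>n. f (s n)" _ c]) auto
  qed
  obtain z where zmin: "\<And>v. f z \<le> f v" using exists_min[OF sc _ ls] by auto
  show ?thesis
  proof (intro exI allI)
    fix v
    have "z \<bullet> v - \<phi> v = 0"
    proof (rule quad_zero)
      show "0 \<le> (norm v)\<^sup>2 / 2" by simp
      fix s
      have "f z \<le> f (z + s *\<^sub>R v)" by (rule zmin)
      then show "0 \<le> s * (z \<bullet> v - \<phi> v) + s * s * ((norm v)\<^sup>2 / 2)"
        unfolding f_def norm_id2 by (simp add: add scale algebra_simps)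
    qed
    then show "\<phi> v = v \<bullet> z" by (simp add: inner_commute)
  qed
qed

lemma adjoint_hilbert:
  fixes f :: "'a::{real_inner, complete_space} \<Rightarrow> 'b::real_inner"
  assumes bl: "bounded_linear f"
  shows "f x \<bullet> y = x \<bullet> adjoint f y"
proof -
  have "\<forall>y. \<exists>w. \<forall>v. f v \<bullet> y = v \<bullet> w"
  proof
    fix y
    have "bounded_linear (\<lambda>v. f v \<bullet> y)"
      by (rule bounded_linear_compose[OF bounded_linear_inner_left bl])
    then show "\<exists>w. \<forall>v. f v \<bullet> y = v \<bullet> w" by (rule riesz)
  qed
  then have "\<exists>g. \<forall>v y. f v \<bullet> y = v \<bullet> g y" by metis
  then have "\<forall>v y. f v \<bullet> y = v \<bullet> adjoint f y" unfolding adjoint_def by (rule someI_ex)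
  then show ?thesis by blast
qed





lemma final_arith:
  fixes Dn1 Dn hd dd2 hx H Ad \<alpha> \<beta> \<gamma> G gm M N \<eta> \<delta> \<tau> \<sigma> \<mu>0 c0 :: real
  assumes sig: "\<sigma> > 0" and tau: "\<tau> > 0" and al: "\<alpha> \<ge> 0" and Npos: "N \<ge> 0" and eta: "0 \<le> \<eta>"
    and dl: "Dn1 - Dn \<le> hd - \<sigma>*dd2 + hx"
    and hdb: "hd - \<sigma>*dd2 \<le> H/(4*\<sigma>)"
    and hxb: "hx \<le> -\<alpha>*Ad + \<beta>*\<gamma>"
    and Hdef: "H = \<alpha>*\<alpha>*G - 2*\<alpha>*\<beta>*gm + \<beta>*\<beta>*M"
    and Bneg: "\<beta>*\<beta>*M - 2*\<alpha>*\<beta>*gm + 4*\<sigma>*\<beta>*\<gamma> \<le> 0"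
    and Adb: "Ad \<ge> (1-\<eta>)*N\<^sup>2 - (1+\<eta>)*\<delta>*N"
    and aG: "\<alpha>*G \<le> \<mu>0*N\<^sup>2"
    and dN: "\<tau>*\<delta> < N"
    and c0: "c0 = 1 - (1+\<eta>)/\<tau> - \<eta> - \<mu>0/(4*\<sigma>)"
  shows "Dn1 \<le> Dn - c0*\<alpha>*N\<^sup>2"
proof -
  have e1: "H/(4*\<sigma>) + \<beta>*\<gamma> = (\<alpha>*\<alpha>*G + (\<beta>*\<beta>*M - 2*\<alpha>*\<beta>*gm + 4*\<sigma>*\<beta>*\<gamma>))/(4*\<sigma>)"
    using sig unfolding Hdef by (simp add: field_simps)
  have e2: "(\<alpha>*\<alpha>*G + (\<beta>*\<beta>*M - 2*\<alpha>*\<beta>*gm + 4*\<sigma>*\<beta>*\<gamma>))/(4*\<sigma>) \<le> \<alpha>*\<alpha>*G/(4*\<sigma>)"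
    using sig Bneg by (simp add: divide_right_mono)
  have e3: "\<alpha>*\<alpha>*G \<le> \<alpha>*(\<mu>0*N\<^sup>2)" using mult_left_mono[OF aG al] by (simp add: mult.assoc)
  have e4: "\<alpha>*\<alpha>*G/(4*\<sigma>) \<le> \<alpha>*(\<mu>0*N\<^sup>2)/(4*\<sigma>)" using e3 sig by (simp add: divide_right_mono)
  have e5: "-\<alpha>*Ad \<le> -\<alpha>*((1-\<eta>)*N\<^sup>2 - (1+\<eta>)*\<delta>*N)" using mult_left_mono[OF Adb al] by simp
  have "\<delta> * N \<le> N/\<tau> * N"
  proof -
    have "\<delta> \<le> N/\<tau>" using dN tau by (simp add: field_simps)
    then show ?thesis using Npos by (rule mult_right_mono)
  qed
  then have e6: "\<alpha>*(1+\<eta>)*(\<delta>*N) \<le> \<alpha>*(1+\<eta>)*(N/\<tau>*N)" by (rule mult_left_mono) (use al eta in simp)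
  have e7: "\<alpha>*(\<mu>0*N\<^sup>2)/(4*\<sigma>) - \<alpha>*((1-\<eta>)*N\<^sup>2) + \<alpha>*(1+\<eta>)*(N/\<tau>*N) = - c0*\<alpha>*N\<^sup>2"
    unfolding c0 using sig tau by (simp add: field_simps power2_eq_square)
  have "Dn1 - Dn \<le> \<alpha>*(\<mu>0*N\<^sup>2)/(4*\<sigma>) - \<alpha>*((1-\<eta>)*N\<^sup>2) + \<alpha>*(1+\<eta>)*(\<delta>*N)"
    using dl hdb hxb e1 e2 e4 e5 by (simp add: algebra_simps)
  also have "\<dots> \<le> - c0*\<alpha>*N\<^sup>2" using e6 e7 by linarith
  finally show ?thesis by simp
qed

lemma norm_comb:
  fixes u v :: "'a::real_inner"
  shows "(norm (p *\<^sub>R u + q *\<^sub>R v))\<^sup>2 = p*p*(norm u)\<^sup>2 + 2*p*q*(u \<bullet> v) + q*q*(norm v)\<^sup>2"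
  by (simp add: power2_norm_eq_inner inner_add_left inner_add_right inner_commute[of v u] algebra_simps)

lemma ab_bound:
  fixes a b \<sigma> :: real
  assumes "\<sigma> > 0"
  shows "a*b - \<sigma>*b\<^sup>2 \<le> a\<^sup>2/(4*\<sigma>)"
proof -
  have "0 \<le> (a - 2*\<sigma>*b)\<^sup>2" by simp
  then have "4*\<sigma>*(a*b - \<sigma>*b\<^sup>2) \<le> a\<^sup>2" by (simp add: power2_eq_square algebra_simps)
  then show ?thesis using assms by (simp add: field_simps)
qed

theorem mainTheorem2:
  fixes R :: "'a::{real_inner, complete_space} \<Rightarrow> ereal"
    and F :: "'a \<Rightarrow> 'b::{real_inner, complete_space}"
    and domF :: "'a set"
    and Lop :: "'a \<Rightarrow> ('a \<Rightarrow>\<^sub>L 'b)"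
    and y y\<delta> :: 'b
    and x0 \<xi>0 :: 'a
    and \<sigma> \<rho> \<eta> Lc \<delta> \<tau> \<mu>0 \<mu>1 c0 :: real
    and \<beta>bar :: ereal
    and adaptive :: bool
    and k :: nat
    and xi x g m :: "nat \<Rightarrow> 'a"
    and r :: "nat \<Rightarrow> 'b"
    and \<alpha> \<beta> \<gamma> :: "nat \<Rightarrow> real"
  assumes R_proper: "proper_fun R" and R_lsc: "lsc_fun R"
    and \<sigma>_pos: "\<sigma> > 0" and R_sc: "strongly_convex R \<sigma>"
    \<comment> \<open>(b)\<close>
    and \<rho>_pos: "\<rho> > 0" and \<xi>0_sub: "\<xi>0 \<in> subdiff R x0"
    and ball_dom: "cball x0 (2 * \<rho>) \<subseteq> domF"
    and sol_ex: "\<exists>xb\<in>domF. F xb = y \<and> bregman R \<xi>0 xb x0 \<le> ereal (\<sigma> * \<rho>\<^sup>2)"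
    \<comment> \<open>(c)\<close>
    and F_wc: "weakly_closed_op F domF"
    \<comment> \<open>(d)\<close>
    and L_cont: "continuous_on (cball x0 (2 * \<rho>)) Lop"
    and \<eta>_range: "0 \<le> \<eta>" "\<eta> < 1"
    and tcc: "\<And>u v. u \<in> cball x0 (2 * \<rho>) \<Longrightarrow> v \<in> cball x0 (2 * \<rho>) \<Longrightarrow>
               norm (F u - F v - blinfun_apply (Lop v) (u - v)) \<le> \<eta> * norm (F u - F v)"
    and Lc_pos: "Lc > 0"
    and L_bound: "\<And>u. u \<in> cball x0 (2 * \<rho>) \<Longrightarrow> norm (Lop u) \<le> Lc"
    \<comment> \<open>noisy data and parameters\<close>
    and \<delta>_pos: "\<delta> > 0" and noise: "norm (y\<delta> - y) \<le> \<delta>"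
    and \<tau>_gt: "\<tau> > 1" and \<beta>bar_pos: "\<beta>bar > 0"
    and \<mu>0_pos: "\<mu>0 > 0" and \<mu>1_pos: "\<mu>1 > 0"
    and c0_def: "c0 = 1 - (1 + \<eta>) / \<tau> - \<eta> - \<mu>0 / (4 * \<sigma>)"
    and c0_pos: "c0 > 0"
    \<comment> \<open>Algorithm 1 (iterates up to index k)\<close>
    and init_xi: "xi 0 = \<xi>0" and init_x: "x 0 = x0"
    and res: "\<And>n. n < k \<Longrightarrow> r n = F (x n) - y\<delta>"
    and grad: "\<And>n. n < k \<Longrightarrow> g n = adjoint (blinfun_apply (Lop (x n))) (r n)"
    and step: "\<And>n. n < k \<Longrightarrow> \<alpha> n =
        (if adaptive then
           (if g n = 0 then \<mu>1 else min (\<mu>0 * (norm (r n))\<^sup>2 / (norm (g n))\<^sup>2) \<mu>1)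
         else \<mu>0 / Lc\<^sup>2)"
    and mom0: "m 0 = 0"
    and mom: "\<And>n. Suc n < k \<Longrightarrow> m (Suc n) = xi (Suc n) - xi n"
    and gam0: "\<gamma> 0 = 0"
    and gam: "\<And>n. Suc n < k \<Longrightarrow> \<gamma> (Suc n) =
        m (Suc n) \<bullet> (x (Suc n) - x n) - (1 - \<eta>) * \<alpha> n * (norm (r n))\<^sup>2
        + (1 + \<eta>) * \<alpha> n * \<delta> * norm (r n) + \<beta> n * \<gamma> n"
    and bet: "\<And>n. n < k \<Longrightarrow> \<beta> n =
        (if m n = 0 then 0
         else real_of_ereal (min (ereal (max 0 ((\<alpha> n * (g n \<bullet> m n) - 2 * \<sigma> * \<gamma> n)
                                                / (norm (m n))\<^sup>2))) \<beta>bar))"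
    and upd_xi: "\<And>n. n < k \<Longrightarrow> xi (Suc n) = xi n - \<alpha> n *\<^sub>R g n + \<beta> n *\<^sub>R m n"
    and upd_x: "\<And>n. n < k \<Longrightarrow> x (Suc n) = grad_conj R (xi (Suc n))"
    \<comment> \<open>no stopping before k\<close>
    and no_stop: "\<And>n. n < k \<Longrightarrow> norm (r n) > \<tau> * \<delta>"
  shows "(\<forall>n\<le>k. x n \<in> cball x0 (2 * \<rho>)) \<and>
         (\<forall>xh. xh \<in> domF \<and> F xh = y \<and> xh \<in> cball x0 (2 * \<rho>) \<and> xh \<in> effdom R \<longrightarrow>
            (\<forall>n<k. bregman R (xi (Suc n)) xh (x (Suc n))
                     \<le> bregman R (xi n) xh (x n) - ereal (c0 * \<alpha> n * (norm (r n))\<^sup>2)))"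
proof -
  define D where "D = effdom R"
  define Rr where "Rr z = real_of_ereal (R z)" for z
  have SC: "sconv D Rr \<sigma>" unfolding D_def Rr_def by (rule sconv_R[OF R_proper R_sc])
  have sub: "xi n \<in> subdiff R (x n)" if "n \<le> k" for n
  proof (cases n)
    case 0 then show ?thesis using \<xi>0_sub init_xi init_x by simp
  next
    case (Suc j)
    then have "j < k" using that by simp
    then have "x n = grad_conj R (xi n)" using upd_x Suc by simp
    then show ?thesis using gc[OF R_proper R_lsc R_sc \<sigma>_pos] by simp
  qed
  have xD: "x n \<in> D" if "n \<le> k" for n using subdiff_real(1)[OF R_proper sub[OF that]] unfolding D_def .
  have ssub: "Rr (x n) + xi n \<bullet> (z - x n) + \<sigma> * (norm (z - x n))\<^sup>2 \<le> Rr z" if "n \<le> k" "z \<in> D" for n z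
    by (rule strong_sub[OF SC \<sigma>_pos xD[OF that(1)] that(2)])
       (use subdiff_real(2)[OF R_proper sub[OF that(1)]] in \<open>simp add: D_def Rr_def\<close>)
  define Dl where "Dl xh n = Rr xh - Rr (x n) - xi n \<bullet> (xh - x n)" for xh n
  have Dl_low: "\<sigma> * (norm (xh - x n))\<^sup>2 \<le> Dl xh n" if "n \<le> k" "xh \<in> D" for xh n
    using ssub[OF that] unfolding Dl_def by simp
  have breg: "bregman R (xi n) xh (x n) = ereal (Dl xh n)" if "n \<le> k" "xh \<in> D" for xh n
    using bregman_real[OF R_proper, of xh "x n" "xi n"] that xD unfolding Dl_def Rr_def D_def by simp
  have alpha_nn: "\<alpha> n \<ge> 0" if "n < k" for n
    using step[OF that] \<mu>0_pos \<mu>1_pos by auto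
  have beta: "0 \<le> \<beta> n \<and> \<beta> n * (\<beta> n * (norm (m n))\<^sup>2 - 2 * \<alpha> n * (g n \<bullet> m n) + 4 * \<sigma> * \<gamma> n) \<le> 0"
    if "n < k" for n
  proof (cases "m n = 0")
    case True then show ?thesis using bet[OF that] by simp
  next
    case False
    define q where "q = (\<alpha> n * (g n \<bullet> m n) - 2 * \<sigma> * \<gamma> n) / (norm (m n))\<^sup>2"
    have Mpos: "(norm (m n))\<^sup>2 > 0" using False by simp
    have bq: "\<beta> n = real_of_ereal (min (ereal (max 0 q)) \<beta>bar)" using bet[OF that] False unfolding q_def by simp
    have b01: "0 \<le> \<beta> n \<and> \<beta> n \<le> max 0 q"
    proof (cases \<beta>bar)
      case (real b)
      then have "b > 0" using \<beta>bar_pos by simp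
      have "\<beta> n = min (max 0 q) b" using bq real by (auto simp: min_def max_def)
      then show ?thesis using \<open>b > 0\<close> by (simp add: min_def max_def)
    next
      case PInf
      then have "\<beta> n = max 0 q" using bq by (auto simp: max_def)
      then show ?thesis by simp
    next
      case MInf then show ?thesis using \<beta>bar_pos by simp
    qed
    show ?thesis
    proof (cases "\<beta> n = 0")
      case True then show ?thesis by simp
    next
      case False2: False
      then have bpos: "\<beta> n > 0" using b01 by simp
      then have "\<beta> n \<le> q" using b01 by (auto simp: max_def split: if_splits)
      then have bM: "\<beta> n * (norm (m n))\<^sup>2 \<le> \<alpha> n * (g n \<bullet> m n) - 2 * \<sigma> * \<gamma> n"
        using Mpos unfolding q_def by (simp add: pos_le_divide_eq)
      have "\<beta> n * (norm (m n))\<^sup>2 \<ge> 0" using bpos by simp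
      then have "\<beta> n * (norm (m n))\<^sup>2 - 2 * \<alpha> n * (g n \<bullet> m n) + 4 * \<sigma> * \<gamma> n \<le> 0" using bM by linarith
      then show ?thesis using bpos by (simp add: mult_nonneg_nonpos)
    qed
  qed
  have Lb: "norm (g n) \<le> Lc * norm (r n)" if "n < k" "x n \<in> cball x0 (2 * \<rho>)" for n
  proof -
    define L where "L = blinfun_apply (Lop (x n))"
    have adj: "L v \<bullet> r n = v \<bullet> g n" for v
      using adjoint_hilbert[OF blinfun.bounded_linear_right, of "Lop (x n)" v "r n"] grad[OF that(1)]
      unfolding L_def by simp
    have "(norm (g n))\<^sup>2 = L (g n) \<bullet> r n" using adj[of "g n"] by (simp add: power2_norm_eq_inner)
    also have "\<dots> \<le> norm (L (g n)) * norm (r n)" by (rule norm_cauchy_schwarz)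
    also have "\<dots> \<le> (Lc * norm (g n)) * norm (r n)"
    proof (rule mult_right_mono)
      have "norm (L (g n)) \<le> norm (Lop (x n)) * norm (g n)" unfolding L_def by (rule norm_blinfun)
      also have "\<dots> \<le> Lc * norm (g n)" using L_bound[OF that(2)] by (simp add: mult_right_mono)
      finally show "norm (L (g n)) \<le> Lc * norm (g n)" .
    qed simp
    finally have *: "norm (g n) * norm (g n) \<le> norm (g n) * (Lc * norm (r n))"
      by (simp add: power2_eq_square algebra_simps)
    show ?thesis
    proof (cases "g n = 0")
      case True then show ?thesis using Lc_pos by simp
    next
      case False
      then show ?thesis using * by simp
    qed
  qed
  have aG: "\<alpha> n * (norm (g n))\<^sup>2 \<le> \<mu>0 * (norm (r n))\<^sup>2" if "n < k" "x n \<in> cball x0 (2 * \<rho>)" for n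
  proof (cases adaptive)
    case True
    show ?thesis
    proof (cases "g n = 0")
      case True then show ?thesis using \<mu>0_pos by simp
    next
      case False
      then have Gpos: "(norm (g n))\<^sup>2 > 0" by simp
      have "\<alpha> n \<le> \<mu>0 * (norm (r n))\<^sup>2 / (norm (g n))\<^sup>2" using step[OF that(1)] \<open>adaptive\<close> False by simp
      then show ?thesis using Gpos by (simp add: pos_le_divide_eq)
    qed
  next
    case False
    then have al: "\<alpha> n = \<mu>0 / Lc\<^sup>2" using step[OF that(1)] by simp
    have "(norm (g n))\<^sup>2 \<le> (Lc * norm (r n))\<^sup>2" using Lb[OF that] by (simp add: power_mono)
    then have "\<mu>0 / Lc\<^sup>2 * (norm (g n))\<^sup>2 \<le> \<mu>0 / Lc\<^sup>2 * (Lc * norm (r n))\<^sup>2"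
      by (rule mult_left_mono) (use \<mu>0_pos in simp)
    also have "\<dots> = \<mu>0 * (norm (r n))\<^sup>2" using Lc_pos by (simp add: power_mult_distrib)
    finally show ?thesis using al by simp
  qed
  have Adb: "(1-\<eta>) * (norm (r n))\<^sup>2 - (1+\<eta>) * \<delta> * norm (r n) \<le> g n \<bullet> (x n - xh)"
    if "n < k" "x n \<in> cball x0 (2 * \<rho>)" "xh \<in> cball x0 (2 * \<rho>)" "F xh = y" for n xh
  proof -
    define L where "L = blinfun_apply (Lop (x n))"
    have adj: "L v \<bullet> r n = v \<bullet> g n" for v
      using adjoint_hilbert[OF blinfun.bounded_linear_right, of "Lop (x n)" v "r n"] grad[OF that(1)]
      unfolding L_def by simp
    define w where "w = L (x n - xh)"
    define e where "e = F (x n) - y"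
    have tcc': "norm (F xh - F (x n) - L (xh - x n)) \<le> \<eta> * norm (F xh - F (x n))"
      using tcc[OF that(3) that(2)] unfolding L_def .
    have eq1: "F xh - F (x n) - L (xh - x n) = -(e - w)"
      unfolding e_def w_def L_def using that(4) by (simp add: blinfun.diff_right algebra_simps)
    have eq2: "F xh - F (x n) = - e" unfolding e_def using that(4) by simp
    have ew: "norm (e - w) \<le> \<eta> * norm e" using tcc' unfolding eq1 by (simp add: eq2 norm_minus_commute)
    have re: "e = r n + (y\<delta> - y)" using res[OF that(1)] unfolding e_def by simp
    have enorm: "norm e \<le> norm (r n) + \<delta>"
      using norm_triangle_ineq[of "r n" "y\<delta> - y"] noise unfolding re by linarith
    have c1: "r n \<bullet> (e - w) \<le> norm (r n) * (\<eta> * norm e)"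
      using norm_cauchy_schwarz[of "r n" "e - w"] mult_left_mono[OF ew norm_ge_zero[of "r n"]] by linarith
    have c4: "norm (r n) * (\<eta> * norm e) \<le> norm (r n) * (\<eta> * (norm (r n) + \<delta>))"
      using enorm \<eta>_range by (simp add: mult_left_mono)
    have c3: "r n \<bullet> e \<ge> (norm (r n))\<^sup>2 - norm (r n) * \<delta>"
    proof -
      have "r n \<bullet> e = (norm (r n))\<^sup>2 + r n \<bullet> (y\<delta> - y)" unfolding re by (simp add: inner_add_right power2_norm_eq_inner)
      moreover have "\<bar>r n \<bullet> (y\<delta> - y)\<bar> \<le> norm (r n) * norm (y\<delta> - y)" by (rule Cauchy_Schwarz_ineq2)
      moreover have "norm (r n) * norm (y\<delta> - y) \<le> norm (r n) * \<delta>" using noise by (simp add: mult_left_mono)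
      ultimately show ?thesis by linarith
    qed
    have "g n \<bullet> (x n - xh) = r n \<bullet> w" using adj[of "x n - xh"] unfolding w_def by (simp add: inner_commute)
    also have "r n \<bullet> w = r n \<bullet> e - r n \<bullet> (e - w)" by (simp add: inner_diff_right)
    finally have "g n \<bullet> (x n - xh) \<ge> (norm (r n))\<^sup>2 - norm (r n) * \<delta> - norm (r n) * (\<eta> * (norm (r n) + \<delta>))"
      using c1 c3 c4 by linarith
    moreover have "(norm (r n))\<^sup>2 - norm (r n) * \<delta> - norm (r n) * (\<eta> * (norm (r n) + \<delta>))
        = (1-\<eta>) * (norm (r n))\<^sup>2 - (1+\<eta>) * \<delta> * norm (r n)" by (simp add: algebra_simps power2_eq_square)
    ultimately show ?thesis by simp
  qed
  have stepL: "Dl xh (Suc n) \<le> Dl xh n - c0 * \<alpha> n * (norm (r n))\<^sup>2 \<and>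
      (Suc n < k \<longrightarrow> m (Suc n) \<bullet> (x (Suc n) - xh) \<le> \<gamma> (Suc n))"
    if "n < k" "x n \<in> cball x0 (2 * \<rho>)" "xh \<in> cball x0 (2 * \<rho>)" "xh \<in> D" "F xh = y"
       "m n \<bullet> (x n - xh) \<le> \<gamma> n" for n xh
  proof -
    have Sk: "Suc n \<le> k" using that(1) by simp
    have nk: "n < k" using that(1) .
    define h where "h = xi (Suc n) - xi n"
    define d where "d = x (Suc n) - x n"
    have h_eq: "h = (- \<alpha> n) *\<^sub>R g n + \<beta> n *\<^sub>R m n" unfolding h_def using upd_xi[OF that(1)] by simp
    have ss: "Rr (x n) + xi n \<bullet> d + \<sigma> * (norm d)\<^sup>2 \<le> Rr (x (Suc n))"
      using ssub[of n "x (Suc n)"] that(1) xD[OF Sk] unfolding d_def by simp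
    have iden: "xi n \<bullet> (xh - x n) - xi (Suc n) \<bullet> (xh - x (Suc n)) = h \<bullet> d + h \<bullet> (x n - xh) + xi n \<bullet> d"
      unfolding h_def d_def by (simp add: inner_diff_left inner_diff_right algebra_simps)
    have dl: "Dl xh (Suc n) - Dl xh n \<le> h \<bullet> d - \<sigma> * (norm d)\<^sup>2 + h \<bullet> (x n - xh)"
      unfolding Dl_def using ss iden by linarith
    have hdb: "h \<bullet> d - \<sigma> * (norm d)\<^sup>2 \<le> (norm h)\<^sup>2 / (4 * \<sigma>)"
      using norm_cauchy_schwarz[of h d] ab_bound[OF \<sigma>_pos, of "norm h" "norm d"] by linarith
    have bn: "0 \<le> \<beta> n" "\<beta> n * (\<beta> n * (norm (m n))\<^sup>2 - 2 * \<alpha> n * (g n \<bullet> m n) + 4 * \<sigma> * \<gamma> n) \<le> 0"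
      using beta[OF that(1)] by auto
    have hx: "h \<bullet> (x n - xh) \<le> - \<alpha> n * (g n \<bullet> (x n - xh)) + \<beta> n * \<gamma> n"
    proof -
      have "h \<bullet> (x n - xh) = - \<alpha> n * (g n \<bullet> (x n - xh)) + \<beta> n * (m n \<bullet> (x n - xh))"
        unfolding h_eq by (simp only: inner_add_left inner_scaleR_left)
      moreover have "\<beta> n * (m n \<bullet> (x n - xh)) \<le> \<beta> n * \<gamma> n" using mult_left_mono[OF that(6) bn(1)] .
      ultimately show ?thesis by linarith
    qed
    have Hn: "(norm h)\<^sup>2 = \<alpha> n * \<alpha> n * (norm (g n))\<^sup>2 - 2 * \<alpha> n * \<beta> n * (g n \<bullet> m n) + \<beta> n * \<beta> n * (norm (m n))\<^sup>2"
      unfolding h_eq norm_comb by simp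
    have Bneg: "\<beta> n * \<beta> n * (norm (m n))\<^sup>2 - 2 * \<alpha> n * \<beta> n * (g n \<bullet> m n) + 4 * \<sigma> * \<beta> n * \<gamma> n \<le> 0"
      using bn(2) by (simp add: algebra_simps)
    have dN: "\<tau> * \<delta> < norm (r n)" using no_stop[OF that(1)] .
    have tau: "\<tau> > 0" using \<tau>_gt by simp
    have AD: "(1-\<eta>) * (norm (r n))\<^sup>2 - (1+\<eta>) * \<delta> * norm (r n) \<le> g n \<bullet> (x n - xh)"
      by (rule Adb[OF that(1,2,3,5)])
    have first: "Dl xh (Suc n) \<le> Dl xh n - c0 * \<alpha> n * (norm (r n))\<^sup>2"
      by (rule final_arith[OF \<sigma>_pos tau alpha_nn[OF that(1)] norm_ge_zero \<eta>_range(1) dl hdb hx Hn Bneg AD aG[OF that(1,2)] dN c0_def])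
    have second: "m (Suc n) \<bullet> (x (Suc n) - xh) \<le> \<gamma> (Suc n)" if Sk2: "Suc n < k"
    proof -
      have mh: "m (Suc n) = h" unfolding h_def using mom[OF Sk2] .
      have "m (Suc n) \<bullet> (x (Suc n) - xh) = h \<bullet> d + h \<bullet> (x n - xh)"
        unfolding mh d_def by (simp add: inner_diff_right)
      moreover have "- \<alpha> n * (g n \<bullet> (x n - xh)) \<le> - \<alpha> n * ((1-\<eta>) * (norm (r n))\<^sup>2 - (1+\<eta>) * \<delta> * norm (r n))"
        using mult_left_mono[OF AD alpha_nn[OF nk]] by simp
      moreover have "- \<alpha> n * ((1-\<eta>) * (norm (r n))\<^sup>2 - (1+\<eta>) * \<delta> * norm (r n))
          = - (1 - \<eta>) * \<alpha> n * (norm (r n))\<^sup>2 + (1 + \<eta>) * \<alpha> n * \<delta> * norm (r n)"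
        by (simp add: algebra_simps)
      moreover have "\<gamma> (Suc n) = h \<bullet> d - (1 - \<eta>) * \<alpha> n * (norm (r n))\<^sup>2
          + (1 + \<eta>) * \<alpha> n * \<delta> * norm (r n) + \<beta> n * \<gamma> n"
        using gam[OF Sk2] unfolding mh d_def .
      ultimately show ?thesis using hx by linarith
    qed
    show ?thesis using first second by blast
  qed
  obtain xb where xb: "xb \<in> domF" "F xb = y" "bregman R \<xi>0 xb x0 \<le> ereal (\<sigma> * \<rho>\<^sup>2)" using sol_ex by blast
  have x0D: "x0 \<in> D" using xD[of 0] init_x by simp
  have xbD: "xb \<in> D"
  proof (rule ccontr)
    assume nd: "xb \<notin> D"
    have "R x0 = ereal (Rr x0)" using R_fin[OF R_proper] x0D unfolding D_def Rr_def by blast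
    then have "bregman R \<xi>0 xb x0 = \<infinity>" using R_notdom[of xb R] nd unfolding bregman_def D_def by simp
    then show False using xb(3) by simp
  qed
  have Dl0: "Dl xb 0 \<le> \<sigma> * \<rho>\<^sup>2" using xb(3) breg[of 0 xb] xbD init_xi init_x by simp
  have xb_near: "norm (xb - x0) \<le> \<rho>"
  proof -
    have "\<sigma> * (norm (xb - x0))\<^sup>2 \<le> \<sigma> * \<rho>\<^sup>2" using Dl_low[of 0 xb] xbD Dl0 init_x by simp
    then have "(norm (xb - x0))\<^sup>2 \<le> \<rho>\<^sup>2" using \<sigma>_pos by simp
    then show ?thesis using \<rho>_pos by (simp add: abs_le_square_iff power2_le_iff_abs_le)
  qed
  have xb_ball: "xb \<in> cball x0 (2 * \<rho>)" using xb_near \<rho>_pos by (simp add: dist_norm norm_minus_commute)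
  have P: "n \<le> k \<longrightarrow> (\<forall>j\<le>n. x j \<in> cball x0 (2 * \<rho>)) \<and> Dl xb n \<le> \<sigma> * \<rho>\<^sup>2 \<and>
      (n < k \<longrightarrow> m n \<bullet> (x n - xb) \<le> \<gamma> n)" for n
  proof (induction n)
    case 0
    then show ?case using init_x \<rho>_pos Dl0 mom0 gam0 by simp
  next
    case (Suc n)
    show ?case
    proof
      assume Sk: "Suc n \<le> k"
      then have nk: "n < k" by simp
      with Suc.IH have IH: "\<forall>j\<le>n. x j \<in> cball x0 (2 * \<rho>)" "Dl xb n \<le> \<sigma> * \<rho>\<^sup>2"
        "m n \<bullet> (x n - xb) \<le> \<gamma> n" by auto
      have st: "Dl xb (Suc n) \<le> Dl xb n - c0 * \<alpha> n * (norm (r n))\<^sup>2 \<and>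
          (Suc n < k \<longrightarrow> m (Suc n) \<bullet> (x (Suc n) - xb) \<le> \<gamma> (Suc n))"
        using stepL[OF nk _ xb_ball xbD xb(2) IH(3)] IH(1) by simp
      have "c0 * \<alpha> n * (norm (r n))\<^sup>2 \<ge> 0" using c0_pos alpha_nn[OF nk] by simp
      then have DS: "Dl xb (Suc n) \<le> \<sigma> * \<rho>\<^sup>2" using st IH(2) by linarith
      have "\<sigma> * (norm (xb - x (Suc n)))\<^sup>2 \<le> \<sigma> * \<rho>\<^sup>2" using Dl_low[OF Sk xbD] DS by linarith
      then have "(norm (xb - x (Suc n)))\<^sup>2 \<le> \<rho>\<^sup>2" using \<sigma>_pos by simp
      then have "norm (xb - x (Suc n)) \<le> \<rho>" using \<rho>_pos by (simp add: power2_le_iff_abs_le)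
      moreover have "norm (x0 - xb) \<le> \<rho>" using xb_near by (simp add: norm_minus_commute)
      ultimately have "norm (x0 - x (Suc n)) \<le> \<rho> + \<rho>" using norm_diff_triangle_le by blast
      then have "x (Suc n) \<in> cball x0 (2 * \<rho>)" by (simp add: dist_norm)
      then have "\<forall>j\<le>Suc n. x j \<in> cball x0 (2 * \<rho>)" using IH(1) le_Suc_eq by auto
      then show "(\<forall>j\<le>Suc n. x j \<in> cball x0 (2 * \<rho>)) \<and> Dl xb (Suc n) \<le> \<sigma> * \<rho>\<^sup>2 \<and>
          (Suc n < k \<longrightarrow> m (Suc n) \<bullet> (x (Suc n) - xb) \<le> \<gamma> (Suc n))" using DS st by simp
    qed
  qed
  have ball: "\<forall>n\<le>k. x n \<in> cball x0 (2 * \<rho>)" using P[of k] by simp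
  show ?thesis
  proof (intro conjI allI impI)
    fix n assume "n \<le> k" then show "x n \<in> cball x0 (2 * \<rho>)" using ball by simp
  next
    fix xh n
    assume H: "xh \<in> domF \<and> F xh = y \<and> xh \<in> cball x0 (2 * \<rho>) \<and> xh \<in> effdom R" and nk: "n < k"
    then have xhD: "xh \<in> D" unfolding D_def by simp
    have Q: "j < k \<longrightarrow> m j \<bullet> (x j - xh) \<le> \<gamma> j" for j
    proof (induction j)
      case 0 then show ?case using mom0 gam0 by simp
    next
      case (Suc j)
      show ?case
      proof
        assume "Suc j < k"
        then have jk: "j < k" by simp
        then show "m (Suc j) \<bullet> (x (Suc j) - xh) \<le> \<gamma> (Suc j)"
          using stepL[OF jk _ _ xhD] Suc.IH ball H \<open>Suc j < k\<close> by simp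
      qed
    qed
    have "Dl xh (Suc n) \<le> Dl xh n - c0 * \<alpha> n * (norm (r n))\<^sup>2"
      using stepL[OF nk _ _ xhD] Q[of n] nk ball H by simp
    then show "bregman R (xi (Suc n)) xh (x (Suc n)) \<le> bregman R (xi n) xh (x n) - ereal (c0 * \<alpha> n * (norm (r n))\<^sup>2)"
      using breg[OF _ xhD, of n] breg[OF _ xhD, of "Suc n"] nk by simp
  qed
qed


end
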